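(* Let $\ell\ge2$ and let $\lambda$ be an $\ell$-core. Then the $n$-vector $(b_0,\ldots,b_{\ell-1})$ of $\lambda$ equals $\pi_\ell^{-1}(\lambda)$.
   Context: Partitions are in English notation; box $(x,y)$ is in row $x$, column $y$. Hook length of a box: boxes weakly to its right in its row plus boxes strictly below it in its column; an $\ell$-core has no hook length divisible by $\ell$. $n$-vector: set $\lambda_p=0$ for $p$ larger than the number of nonzero parts. For $p\ge1$ let $r_p=\lfloor(\lambda_p-p)/\ell\rfloor+1$ (the region of the box $(p,\lambda_p)$, where region $r$ consists of boxes $(x,y)$ with $(r-1)\ell\le y-x<r\ell$). For $0\le j\le\ell-1$, $b_j=\max\{r_p: p\ge1,\ \lambda_p-p\equiv j\pmod\ell\}$. For $\mathbf{b}=(b_0,\ldots,b_{\ell-1})\in\mathbf{Z}^\ell$ with $\sum b_j=0$, let $X(\mathbf{b})=\{r\ell+j:0\le j\le\ell-1,\ r\in\mathbf{Z},\ r\le b_j\}$ and let $\pi_\ell(\mathbf{b})$ be the partition whose nonzero parts are the positive values of $\#\{y\in\mathbf{Z}\setminus X(\mathbf{b}):y<x\}$, $x\in X(\mathbf{b})$. It is known that $\pi_\ell$ is a bijection from $\{\mathbf{b}\in\mathbf{Z}^\ell:\sum b_j=0\}$ onto the set of $\ell$-cores. *)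

theory Defs
  imports Main "HOL-Library.Multiset"
begin

definition is_partition :: "nat list \<Rightarrow> bool" where
  "is_partition lam \<longleftrightarrow> sorted_wrt (\<ge>) lam \<and> 0 \<notin> set lam"

definition part :: "nat list \<Rightarrow> nat \<Rightarrow> nat" where
  "part lam p = (if 1 \<le> p \<and> p \<le> length lam then lam ! (p - 1) else 0)"

definition in_diagram :: "nat list \<Rightarrow> nat \<Rightarrow> nat \<Rightarrow> bool" where
  "in_diagram lam x y \<longleftrightarrow> 1 \<le> x \<and> 1 \<le> y \<and> y \<le> part lam x"

text \<open>Hook length of box (x,y): boxes weakly to its right in row x plus boxes strictly below it.\<close>
definition hook :: "nat list \<Rightarrow> nat \<Rightarrow> nat \<Rightarrow> nat" where
  "hook lam x y = (part lam x + 1 - y) + card {z. x < z \<and> y \<le> part lam z}"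

definition is_core :: "nat \<Rightarrow> nat list \<Rightarrow> bool" where
  "is_core l lam \<longleftrightarrow> is_partition lam \<and>
     (\<forall>x y. in_diagram lam x y \<longrightarrow> \<not> l dvd hook lam x y)"

definition region :: "nat \<Rightarrow> nat list \<Rightarrow> nat \<Rightarrow> int" where
  "region l lam p = (int (part lam p) - int p) div int l + 1"

definition nvec :: "nat \<Rightarrow> nat list \<Rightarrow> int list" where
  "nvec l lam = map (\<lambda>j. Sup {region l lam p | p. 1 \<le> p \<and>
        (int (part lam p) - int p) mod int l = int j}) [0..<l]"

definition Xset :: "nat \<Rightarrow> int list \<Rightarrow> int set" where
  "Xset l b = {r * int l + int j | r j. j < l \<and> r \<le> b ! j}"

definition gapcount :: "nat \<Rightarrow> int list \<Rightarrow> int \<Rightarrow> nat" where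
  "gapcount l b x = card {y. y \<notin> Xset l b \<and> y < x}"

definition pi_l :: "nat \<Rightarrow> int list \<Rightarrow> nat list" where
  "pi_l l b = rev (sorted_list_of_multiset
     (image_mset (gapcount l b) (mset_set {x \<in> Xset l b. 0 < gapcount l b x})))"

end

theory Submission
  imports Defs
begin

lemma int_set_has_max:
  fixes X :: "int set"
  assumes "x0 \<in> X" and "\<And>y. y \<in> X \<Longrightarrow> y \<le> u"
  shows "\<exists>x\<in>X. \<forall>y\<in>X. y \<le> x"
proof -
  let ?F = "X \<inter> {x0..u}"
  have fin: "finite ?F" by auto
  have ne: "?F \<noteq> {}" using assms by auto
  have "Max ?F \<in> X" using Max_in[OF fin ne] by auto
  moreover have "\<forall>y\<in>X. y \<le> Max ?F"
  proof
    fix y assume "y \<in> X"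
    show "y \<le> Max ?F"
    proof (cases "y \<ge> x0")
      case True then show ?thesis using \<open>y \<in> X\<close> assms fin by (intro Max_ge) auto
    next
      case False
      have "x0 \<le> Max ?F" using assms fin by (intro Max_ge) auto
      then show ?thesis using False by simp
    qed
  qed
  ultimately show ?thesis by blast
qed

definition aa :: "nat list \<Rightarrow> nat \<Rightarrow> int" where
  "aa lam q = int (part lam q) - int q"

lemma part_mono:
  assumes "is_partition lam" "1 \<le> q" "q \<le> q'"
  shows "part lam q' \<le> part lam q"
proof (cases "q' \<le> length lam")
  case True
  have "sorted_wrt (\<ge>) lam" using assms(1) by (simp add: is_partition_def)
  then have "q - 1 \<le> q' - 1 \<Longrightarrow> q' - 1 < length lam \<Longrightarrow> lam ! (q'-1) \<le> lam ! (q-1)"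
    by (metis le_neq_implies_less less_le_trans nle_le sorted_wrt_nth_less)
  then show ?thesis using True assms by (simp add: part_def)
next
  case False then show ?thesis by (simp add: part_def)
qed

lemma part_big: "length lam < q \<Longrightarrow> part lam q = 0"
  by (simp add: part_def)

lemma part_pos: "is_partition lam \<Longrightarrow> 1 \<le> q \<Longrightarrow> q \<le> length lam \<Longrightarrow> 0 < part lam q"
proof -
  assume a: "is_partition lam" "1 \<le> q" "q \<le> length lam"
  then have "lam ! (q - 1) \<in> set lam" by (intro nth_mem) simp
  then have "lam ! (q - 1) \<noteq> 0" using a(1) unfolding is_partition_def by metis
  then show ?thesis using a unfolding part_def by simp
qed

lemma aa_strict:
  assumes "is_partition lam" "1 \<le> q" "q < q'"
  shows "aa lam q' < aa lam q"
  using part_mono[OF assms(1,2), of q'] assms(3) unfolding aa_def by simp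

lemma aa_inj: "is_partition lam \<Longrightarrow> 1 \<le> q \<Longrightarrow> 1 \<le> q' \<Longrightarrow> aa lam q = aa lam q' \<Longrightarrow> q = q'"
  by (metis aa_strict less_irrefl nat_neq_iff)

lemma aa_big: "length lam < q \<Longrightarrow> aa lam q = - int q"
  by (simp add: aa_def part_big)

lemma aa_ge: "aa lam q \<ge> - int q" by (simp add: aa_def)

lemma aa_le: "is_partition lam \<Longrightarrow> 1 \<le> q \<Longrightarrow> aa lam q < int (part lam 1)"
  using part_mono[of lam 1 q] unfolding aa_def by simp


lemma core_step:
  assumes core: "is_core l lam" and l: "1 \<le> l" and p: "1 \<le> p"
  shows "\<exists>p'\<ge>1. aa lam p' = aa lam p - int l"
proof (rule ccontr)
  assume nS: "\<not> (\<exists>p'\<ge>1. aa lam p' = aa lam p - int l)"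
  have partn: "is_partition lam" using core by (simp add: is_core_def)
  define y where "y = aa lam p - int l"
  define P where "P q \<longleftrightarrow> p \<le> q \<and> aa lam (q+1) \<le> y" for q
  define q0 where "q0 = length lam + p + nat \<bar>y\<bar>"
  have "P q0" unfolding P_def q0_def using aa_big[of lam "length lam + p + nat \<bar>y\<bar> + 1"] by simp
  define q where "q = (LEAST q. P q)"
  have Pq: "P q" unfolding q_def by (rule LeastI[of P q0, OF \<open>P q0\<close>])
  have pq: "p \<le> q" using Pq P_def by simp
  have lt1: "aa lam (q+1) < y"
  proof -
    have "aa lam (q+1) \<noteq> y" using nS y_def by fastforce
    then show ?thesis using Pq P_def by simp
  qed
  have gt: "aa lam q > y"
  proof (cases "q = p")
    case True then show ?thesis using y_def l by simp
  next
    case False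
    then have "p \<le> q - 1" "q - 1 < q" using pq by auto
    then have "\<not> P (q - 1)" using not_less_Least q_def by blast
    then have "aa lam (q - 1 + 1) > y" using \<open>p \<le> q - 1\<close> P_def by simp
    then show ?thesis using \<open>q - 1 < q\<close> by simp
  qed
  define c where "c = nat (y + int q + 1)"
  have cpos: "y + int q + 1 \<ge> 1" using lt1 aa_ge[of "q+1" lam] by simp
  have c1: "part lam q \<ge> c" using gt cpos unfolding c_def aa_def by simp
  have c2: "part lam (q+1) < c" using lt1 cpos unfolding c_def aa_def by simp
  have s1: "z \<le> q" if "c \<le> part lam z" for z
  proof (rule ccontr)
    assume "\<not> z \<le> q"
    then have "part lam z \<le> part lam (q+1)" using part_mono[OF partn, of "q+1" z] by simp
    then show False using c2 \<open>c \<le> part lam z\<close> by simp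
  qed
  have s2: "c \<le> part lam z" if "p < z" "z \<le> q" for z
  proof -
    have "part lam q \<le> part lam z" using part_mono[OF partn, of z q] p that by simp
    then show "c \<le> part lam z" using c1 by simp
  qed
  have setq: "{z. p < z \<and> c \<le> part lam z} = {p<..q}"
    using s1 s2 by auto
  have cp: "c \<le> part lam p" using c1 part_mono[OF partn p pq] by simp
  have ind: "in_diagram lam p c" using cp cpos p unfolding in_diagram_def c_def by simp
  have "hook lam p c = part lam p + 1 - c + (q - p)"
    unfolding hook_def setq by simp
  also have "int \<dots> = int l"
    using cp pq cpos unfolding c_def y_def aa_def by (simp add: of_nat_diff)
  finally have "hook lam p c = l" by simp
  then show False using core ind unfolding is_core_def by (metis dvd_refl)
qed

lemma core_steps:
  assumes core: "is_core l lam" and l: "1 \<le> l" and p: "1 \<le> p"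
  shows "\<exists>p'\<ge>1. aa lam p' = aa lam p - int k * int l"
proof (induction k)
  case 0 then show ?case using p by auto
next
  case (Suc k)
  then obtain p' where "p' \<ge> 1" "aa lam p' = aa lam p - int k * int l" by auto
  then show ?case using core_step[OF core l \<open>p' \<ge> 1\<close>] by (auto simp: algebra_simps)
qed


lemma residue_exists:
  assumes "j < l"
  shows "\<exists>p\<ge>1. aa lam p mod int l = int j \<and> length lam < p"
proof -
  define p where "p = (length lam + 1) * l + (l - j)"
  have "length lam < (length lam + 1) * l" using assms by (cases l) auto
  then have "length lam < p" unfolding p_def by simp
  then have "aa lam p = - int p" by (rule aa_big)
  also have "\<dots> = int j + (- int (length lam + 2)) * int l"
    using assms unfolding p_def by (simp add: of_nat_diff algebra_simps)
  finally have "aa lam p mod int l = int j mod int l" by simp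
  also have "\<dots> = int j" using assms by simp
  finally show ?thesis using \<open>length lam < p\<close> by (intro exI[of _ p]) auto
qed

lemma region_aa: "region l lam p = aa lam p div int l + 1"
  by (simp add: region_def aa_def)

lemma nvec_nth: "j < l \<Longrightarrow> nvec l lam ! j =
   Sup {aa lam p div int l + 1 | p. 1 \<le> p \<and> aa lam p mod int l = int j}"
  by (simp add: nvec_def region_aa aa_def)

lemma runner_max:
  assumes "is_partition lam" "1 \<le> l" "j < l"
  shows "\<exists>p\<ge>1. aa lam p mod int l = int j \<and> nvec l lam ! j = aa lam p div int l + 1 \<and>
     (\<forall>p'\<ge>1. aa lam p' mod int l = int j \<longrightarrow> aa lam p' div int l \<le> aa lam p div int l)"
proof -
  let ?R = "{aa lam p div int l + 1 | p. 1 \<le> p \<and> aa lam p mod int l = int j}"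
  obtain p0 where p0: "p0 \<ge> 1" "aa lam p0 mod int l = int j" using residue_exists[OF assms(3)] by blast
  have bd: "y \<le> int (part lam 1) + 1" if "y \<in> ?R" for y
  proof -
    from that obtain p where "y = aa lam p div int l + 1" "1 \<le> p" by auto
    moreover have "aa lam p div int l \<le> int (part lam 1) div int l"
      using aa_le[OF assms(1) \<open>1 \<le> p\<close>] assms(2) by (intro zdiv_mono1) auto
    moreover have "int (part lam 1) div int l \<le> int (part lam 1)"
      by (simp add: zdiv_int[symmetric] div_le_dividend del: of_nat_div)
    ultimately show ?thesis by simp
  qed
  obtain x where x: "x \<in> ?R" "\<forall>y\<in>?R. y \<le> x"
    using int_set_has_max[of "aa lam p0 div int l + 1" ?R, OF _ bd] p0 by blast
  then obtain p where p: "x = aa lam p div int l + 1" "1 \<le> p" "aa lam p mod int l = int j" by auto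
  have "Sup ?R = x" using x by (intro cSup_eq_maximum) auto
  then have "nvec l lam ! j = x" using nvec_nth[OF assms(3)] by simp
  moreover have "\<forall>p'\<ge>1. aa lam p' mod int l = int j \<longrightarrow> aa lam p' div int l \<le> aa lam p div int l"
    using x(2) p(1) by fastforce
  ultimately show ?thesis using p by blast
qed

definition inS :: "nat list \<Rightarrow> int \<Rightarrow> bool" where
  "inS lam x \<longleftrightarrow> (\<exists>p\<ge>1. aa lam p = x)"

lemma runner:
  assumes core: "is_core l lam" and l: "1 \<le> l" and j: "j < l"
  shows "inS lam (r * int l + int j) \<longleftrightarrow> r \<le> nvec l lam ! j - 1"
proof -
  have pt: "is_partition lam" using core by (simp add: is_core_def)
  obtain p where p: "p\<ge>1" "aa lam p mod int l = int j" "nvec l lam ! j = aa lam p div int l + 1"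
     "\<forall>p'\<ge>1. aa lam p' mod int l = int j \<longrightarrow> aa lam p' div int l \<le> aa lam p div int l"
    using runner_max[OF pt l j] by blast
  have jl: "int j mod int l = int j" "int j div int l = 0" using j by auto
  show ?thesis
  proof
    assume "inS lam (r * int l + int j)"
    then obtain p' where p': "p' \<ge> 1" "aa lam p' = r * int l + int j" by (auto simp: inS_def)
    have "aa lam p' mod int l = int j" "aa lam p' div int l = r" using p' l jl by auto
    then show "r \<le> nvec l lam ! j - 1" using p(3,4) p' by fastforce
  next
    assume r: "r \<le> nvec l lam ! j - 1"
    define m where "m = aa lam p div int l"
    have am: "aa lam p = m * int l + int j" using p(2) unfolding m_def
      by (metis mult_div_mod_eq mult.commute)
    obtain p' where "p' \<ge> 1" "aa lam p' = aa lam p - int (nat (m - r)) * int l"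
      using core_steps[OF core l p(1)] by blast
    moreover have "aa lam p - int (nat (m - r)) * int l = r * int l + int j"
      using r p(3) am unfolding m_def by (simp add: algebra_simps)
    ultimately show "inS lam (r * int l + int j)" by (auto simp: inS_def)
  qed
qed

lemma Xset_char:
  assumes core: "is_core l lam" and l: "1 \<le> l"
  shows "z \<in> Xset l (nvec l lam) \<longleftrightarrow> inS lam (z - int l)"
proof
  assume "z \<in> Xset l (nvec l lam)"
  then obtain r j where "z = r * int l + int j" "j < l" "r \<le> nvec l lam ! j" by (auto simp: Xset_def)
  then show "inS lam (z - int l)" using runner[OF core l, of j "r - 1"] by (simp add: algebra_simps)
next
  assume h: "inS lam (z - int l)"
  define r where "r = (z - int l) div int l"
  define j where "j = nat ((z - int l) mod int l)"
  have j: "j < l" "int j = (z - int l) mod int l" using l unfolding j_def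
    by (simp_all add: nat_less_iff)
  have "z - int l = r * int l + int j" using j(2) unfolding r_def by (metis mult_div_mod_eq mult.commute)
  then have "r \<le> nvec l lam ! j - 1" using runner[OF core l j(1), of r] h by simp
  moreover have "z = (r + 1) * int l + int j" using \<open>z - int l = r * int l + int j\<close> by (simp add: algebra_simps)
  ultimately show "z \<in> Xset l (nvec l lam)" using j(1) unfolding Xset_def by force
qed


lemma inS_aa: "1 \<le> q \<Longrightarrow> inS lam (aa lam q)" by (auto simp: inS_def)

lemma gap_count:
  assumes pt: "is_partition lam" and p: "1 \<le> p"
  shows "card {y. \<not> inS lam y \<and> y < aa lam p} = part lam p"
proof -
  define T where "T = length lam + p"
  have eq: "{y. \<not> inS lam y \<and> y < aa lam p} = {- int T..<aa lam p} - aa lam ` {p<..T}"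
  proof (intro set_eqI iffI)
    fix y assume y: "y \<in> {y. \<not> inS lam y \<and> y < aa lam p}"
    have "y \<ge> - int T"
    proof (rule ccontr)
      assume "\<not> y \<ge> - int T"
      then have "length lam < nat (-y)" "1 \<le> nat (-y)" unfolding T_def using p by auto
      then have "inS lam (aa lam (nat (-y)))" by (intro inS_aa)
      moreover have "aa lam (nat (-y)) = y" using aa_big[OF \<open>length lam < nat (-y)\<close>]
        \<open>\<not> y \<ge> - int T\<close> by simp
      ultimately show False using y by simp
    qed
    moreover have "y \<notin> aa lam ` {p<..T}" using y inS_aa p by fastforce
    ultimately show "y \<in> {- int T..<aa lam p} - aa lam ` {p<..T}" using y by auto
  next
    fix y assume y: "y \<in> {- int T..<aa lam p} - aa lam ` {p<..T}"
    have "\<not> inS lam y"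
    proof
      assume "inS lam y"
      then obtain q where q: "q \<ge> 1" "aa lam q = y" by (auto simp: inS_def)
      have "p < q"
      proof (rule ccontr)
        assume "\<not> p < q"
        then have "aa lam p \<le> aa lam q" using aa_strict[OF pt q(1), of p] by (cases "q = p") auto
        then show False using y q by simp
      qed
      moreover have "q \<le> T"
      proof (rule ccontr)
        assume "\<not> q \<le> T"
        then have "aa lam q = - int q" using aa_big[of lam q] unfolding T_def by simp
        then show False using y q \<open>\<not> q \<le> T\<close> by simp
      qed
      ultimately show False using y q by auto
    qed
    then show "y \<in> {y. \<not> inS lam y \<and> y < aa lam p}" using y by auto
  qed
  have sub: "aa lam ` {p<..T} \<subseteq> {- int T..<aa lam p}"
  proof
    fix x assume "x \<in> aa lam ` {p<..T}"
    then obtain q where q: "p < q" "q \<le> T" "x = aa lam q" by auto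
    then show "x \<in> {- int T..<aa lam p}" using aa_strict[OF pt p q(1)] aa_ge[of q lam] by auto
  qed
  have inj: "inj_on (aa lam) {p<..T}"
    using aa_inj[OF pt] p by (intro inj_onI) auto
  have "card {y. \<not> inS lam y \<and> y < aa lam p} = card {- int T..<aa lam p} - card {p<..T}"
    unfolding eq using card_Diff_subset[OF _ sub] card_image[OF inj] by simp
  also have "\<dots> = nat (aa lam p + int T) - (T - p)" by simp
  also have "\<dots> = part lam p" unfolding aa_def T_def by simp
  finally show ?thesis .
qed


lemma sum_zero:
  assumes core: "is_core l lam" and l: "1 \<le> l"
  shows "(\<Sum>j<l. nvec l lam ! j) = 0"
proof -
  have pt: "is_partition lam" using core by (simp add: is_core_def)
  define L where "L = length lam + part lam 1 + 2"
  have LL: "L \<le> L * l" using l by simp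
  have P0: "part lam 1 < L" "length lam < L" by (simp_all add: L_def)
  have P1: "part lam 1 < L * l" "length lam < L * l" using P0 LL by linarith+
  have P2: "int (part lam 1) < int L * int l" using P1 by (metis of_nat_less_iff of_nat_mult)
  define W where "W = {x \<in> {- int (L*l)..<int (L*l)}. inS lam x}"
  have W1: "W = aa lam ` {1..L*l}"
  proof (intro set_eqI iffI)
    fix x assume "x \<in> W"
    then obtain q where q: "q \<ge> 1" "aa lam q = x" "x \<ge> - int (L*l)" by (auto simp: W_def inS_def)
    have "q \<le> L * l"
    proof (rule ccontr)
      assume "\<not> q \<le> L * l"
      then have "length lam < q" using P1 by simp
      then show False using aa_big[of lam q] q \<open>\<not> q \<le> L * l\<close> by simp
    qed
    then show "x \<in> aa lam ` {1..L*l}" using q by auto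
  next
    fix x assume "x \<in> aa lam ` {1..L*l}"
    then obtain q where q: "1 \<le> q" "q \<le> L*l" "x = aa lam q" by auto
    have "x < int (L*l)" using aa_le[OF pt q(1)] q(3) P2 by simp
    moreover have "int q \<le> int L * int l" using q(2) by (metis of_nat_le_iff of_nat_mult)
    then have "x \<ge> - int (L*l)" using aa_ge[of q lam] q by simp
    ultimately show "x \<in> W" using q inS_aa unfolding W_def by auto
  qed
  have cW1: "card W = L * l"
    unfolding W1 by (subst card_image) (use aa_inj[OF pt] in \<open>auto intro!: inj_onI\<close>)
  define g where "g = (\<lambda>(j::nat, r::int). r * int l + int j)"
  define Sg where "Sg = Sigma {..<l} (\<lambda>j. {- int L .. nvec l lam ! j - 1})"
  have ginj: "inj_on g Sg"
  proof (intro inj_onI)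
    fix a b assume "a \<in> Sg" "b \<in> Sg" "g a = g b"
    obtain j r where a: "a = (j, r)" "j < l" using \<open>a \<in> Sg\<close> Sg_def by auto
    obtain j' r' where b: "b = (j', r')" "j' < l" using \<open>b \<in> Sg\<close> Sg_def by auto
    have e: "r * int l + int j = r' * int l + int j'" using \<open>g a = g b\<close> a b g_def by simp
    have m1: "(r * int l + int j) mod int l = int j" and d1: "(r * int l + int j) div int l = r"
      using a l by auto
    have m2: "(r' * int l + int j') mod int l = int j'" and d2: "(r' * int l + int j') div int l = r'"
      using b l by auto
    have "int j' = int j" using m1 unfolding e m2 .
    moreover have "r' = r" using d1 unfolding e d2 .
    ultimately show "a = b" using a(1) b(1) by simp
  qed
  have gimg: "g ` Sg = W"
  proof (intro set_eqI iffI)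
    fix x assume "x \<in> g ` Sg"
    then obtain j r where jr: "j < l" "- int L \<le> r" "r \<le> nvec l lam ! j - 1" "x = r * int l + int j"
      by (auto simp: Sg_def g_def)
    have ins: "inS lam x" using runner[OF core l jr(1)] jr by simp
    then obtain q where q: "q \<ge> 1" "aa lam q = x" by (auto simp: inS_def)
    have "x < int (L*l)" using aa_le[OF pt q(1)] q P2 by simp
    moreover have "- int L * int l \<le> r * int l" using jr(2) by (intro mult_right_mono) auto
    then have "x \<ge> - int (L*l)" using jr(4) by simp
    ultimately show "x \<in> W" using ins unfolding W_def by auto
  next
    fix x assume x: "x \<in> W"
    define r where "r = x div int l"
    define j where "j = nat (x mod int l)"
    have j: "j < l" "int j = x mod int l" using l unfolding j_def by (simp_all add: nat_less_iff)
    have xe: "x = r * int l + int j" using j(2) unfolding r_def by (metis mult_div_mod_eq mult.commute)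
    have "r \<le> nvec l lam ! j - 1" using runner[OF core l j(1), of r] x xe W_def by simp
    moreover have "- int L \<le> r"
    proof (rule ccontr)
      assume "\<not> - int L \<le> r"
      then have "r * int l \<le> (- int L - 1) * int l" by (intro mult_right_mono) auto
      then have "x < - int (L * l)" using xe j(1) by (simp add: algebra_simps)
      then show False using x W_def by simp
    qed
    ultimately show "x \<in> g ` Sg" unfolding Sg_def g_def using xe j(1)
      by (intro image_eqI[of _ _ "(j, r)"]) auto
  qed
  have Bge: "- int L \<le> nvec l lam ! j - 1" if "j < l" for j
  proof -
    define q where "q = L * l - j"
    have "L \<le> L * l - j"
    proof -
      have "L * 2 \<le> L * l" if "2 \<le> l" using that by simp
      then show ?thesis using l that unfolding L_def
        by (cases "l = 1") (auto simp: algebra_simps)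
    qed
    then have ql: "length lam < q" "1 \<le> q" unfolding q_def L_def by auto
    have jle: "j \<le> L * l" using \<open>L \<le> L * l - j\<close> P0 by linarith
    have "int q = int L * int l - int j" unfolding q_def using jle by (simp add: of_nat_diff)
    then have "aa lam q = - int L * int l + int j"
      using aa_big[OF ql(1)] by simp
    then have "inS lam (- int L * int l + int j)" using inS_aa[OF ql(2), of lam] by simp
    then show ?thesis using runner[OF core l that, of "- int L"] by simp
  qed
  have "card Sg = (\<Sum>j<l. card {- int L .. nvec l lam ! j - 1})"
    unfolding Sg_def by (simp add: card_SigmaI)
  then have "int (card Sg) = (\<Sum>j<l. int (card {- int L .. nvec l lam ! j - 1}))"
    by (simp add: of_nat_sum)
  also have "\<dots> = (\<Sum>j<l. nvec l lam ! j + int L)"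
  proof (intro sum.cong refl)
    fix j assume "j \<in> {..<l}"
    then show "int (card {- int L .. nvec l lam ! j - 1}) = nvec l lam ! j + int L"
      using Bge[of j] by simp
  qed
  finally have "int (card Sg) = (\<Sum>j<l. nvec l lam ! j + int L)" .
  moreover have "card Sg = L * l" using card_image[OF ginj] gimg cW1 by simp
  ultimately have "(\<Sum>j<l. nvec l lam ! j + int L) = int L * int l" by simp
  then show ?thesis by (simp add: sum.distrib)
qed


lemma gapcount_char:
  assumes core: "is_core l lam" and l: "1 \<le> l" and p: "1 \<le> p"
  shows "gapcount l (nvec l lam) (aa lam p + int l) = part lam p"
proof -
  have pt: "is_partition lam" using core by (simp add: is_core_def)
  have "{y. y \<notin> Xset l (nvec l lam) \<and> y < aa lam p + int l}
        = (\<lambda>y. y + int l) ` {y. \<not> inS lam y \<and> y < aa lam p}"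
  proof (intro set_eqI iffI)
    fix y assume "y \<in> {y. y \<notin> Xset l (nvec l lam) \<and> y < aa lam p + int l}"
    then show "y \<in> (\<lambda>y. y + int l) ` {y. \<not> inS lam y \<and> y < aa lam p}"
      using Xset_char[OF core l, of y] by (intro image_eqI[of _ _ "y - int l"]) auto
  next
    fix y assume "y \<in> (\<lambda>y. y + int l) ` {y. \<not> inS lam y \<and> y < aa lam p}"
    then show "y \<in> {y. y \<notin> Xset l (nvec l lam) \<and> y < aa lam p + int l}"
      using Xset_char[OF core l, of y] by auto
  qed
  then have "gapcount l (nvec l lam) (aa lam p + int l) = card {y. \<not> inS lam y \<and> y < aa lam p}"
    unfolding gapcount_def by (simp add: card_image)
  then show ?thesis using gap_count[OF pt p] by simp
qed

lemma map_part: "map (part lam) [1..<length lam + 1] = lam"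
  by (rule nth_equalityI) (simp_all add: part_def del: upt_Suc)

lemma pi_eq:
  assumes core: "is_core l lam" and l: "1 \<le> l"
  shows "pi_l l (nvec l lam) = lam"
proof -
  have pt: "is_partition lam" using core by (simp add: is_core_def)
  define f where "f = (\<lambda>p. aa lam p + int l)"
  have setE: "{x \<in> Xset l (nvec l lam). 0 < gapcount l (nvec l lam) x} = f ` {1..length lam}"
  proof (intro set_eqI iffI)
    fix x assume x: "x \<in> {x \<in> Xset l (nvec l lam). 0 < gapcount l (nvec l lam) x}"
    then obtain p where p: "p \<ge> 1" "aa lam p = x - int l"
      using Xset_char[OF core l, of x] by (auto simp: inS_def)
    have xf: "x = f p" using p f_def by simp
    have "0 < part lam p" using x gapcount_char[OF core l p(1)] xf f_def by simp
    then have "p \<le> length lam" using part_big[of lam p] by (cases "p \<le> length lam") auto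
    then show "x \<in> f ` {1..length lam}" using p xf by auto
  next
    fix x assume "x \<in> f ` {1..length lam}"
    then obtain p where p: "1 \<le> p" "p \<le> length lam" "x = f p" by auto
    have "x \<in> Xset l (nvec l lam)" using Xset_char[OF core l, of x] p inS_aa[OF p(1)] f_def by simp
    moreover have "0 < gapcount l (nvec l lam) x"
      using gapcount_char[OF core l p(1)] part_pos[OF pt p(1,2)] p f_def by simp
    ultimately show "x \<in> {x \<in> Xset l (nvec l lam). 0 < gapcount l (nvec l lam) x}" by simp
  qed
  have inj: "inj_on f {1..length lam}" unfolding f_def using aa_inj[OF pt] by (intro inj_onI) auto
  have "image_mset (gapcount l (nvec l lam)) (mset_set (f ` {1..length lam}))
      = image_mset (gapcount l (nvec l lam)) (image_mset f (mset_set {1..length lam}))"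
    using image_mset_mset_set[OF inj] by simp
  also have "\<dots> = image_mset (part lam) (mset_set {1..length lam})"
    unfolding multiset.map_comp
    using gapcount_char[OF core l] unfolding f_def by (intro image_mset_cong) auto
  also have "mset_set {1..length lam} = mset [1..<length lam + 1]"
    by (metis atLeastLessThanSuc_atLeastAtMost Suc_eq_plus1 distinct_upt mset_set_set set_upt)
  also have "image_mset (part lam) (mset [1..<length lam + 1]) = mset lam"
    by (metis map_part mset_map)
  finally have M: "image_mset (gapcount l (nvec l lam))
      (mset_set {x \<in> Xset l (nvec l lam). 0 < gapcount l (nvec l lam) x}) = mset lam"
    using setE by simp
  have "sorted (rev lam)" using pt by (simp add: is_partition_def sorted_wrt_rev)
  then have "sort lam = rev lam" by (intro properties_for_sort) auto
  then show ?thesis unfolding pi_l_def M by (simp add: sorted_list_of_multiset_mset)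
qed

theorem mainTheorem6:
  fixes l :: nat and lam :: "nat list"
  assumes "2 \<le> l" and "is_core l lam"
  shows "length (nvec l lam) = l \<and> sum_list (nvec l lam) = 0 \<and> pi_l l (nvec l lam) = lam"
proof -
  have l: "1 \<le> l" using assms by simp
  have len: "length (nvec l lam) = l" by (simp add: nvec_def)
  have "sum_list (nvec l lam) = (\<Sum>j<l. nvec l lam ! j)"
    using len by (simp add: sum_list_sum_nth atLeast0LessThan)
  then show ?thesis using len sum_zero[OF assms(2) l] pi_eq[OF assms(2) l] by simp
qed

end
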